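(* For any time warps $f,g,h$: (a) $f\backslash(g\wedge h)=(f\backslash g)\wedge(f\backslash h)$; (b) $(g\wedge h)\backslash f=(g\backslash f)\vee(h\backslash f)$; (c) $f\backslash(g\vee h)=(f\backslash g)\vee(f\backslash h)$; (d) $(g\vee h)\backslash f=(g\backslash f)\wedge(h\backslash f)$; (e) $(g\wedge h)/f=(g/f)\wedge(h/f)$; (f) $f/(g\wedge h)=(f/g)\vee(f/h)$; (g) $(g\vee h)/f=(g/f)\vee(h/f)$; (h) $f/(g\vee h)=(f/g)\wedge(f/h)$.
   Context: Let $\overline{\omega}=\omega\cup\{\omega\}$ be the natural numbers with a top element $\omega$ adjoined, with its natural total order. A time warp is a monotone map $f\colon\overline{\omega}\to\overline{\omega}$ with $f(0)=0$ and $f(\omega)=\bigvee\{f(n)\mid n\in\omega\}$. The set $W$ of time warps is ordered pointwise, with $\wedge,\vee$ the pointwise meet and join, and $fg:=f\circ g$. The residuals $\backslash,/$ are the binary operations on $W$ satisfying, for all $f,g,h\in W$: $f\le h/g \iff fg\le h \iff g\le f\backslash h$. *)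

theory Defs
  imports Main "HOL-Library.Extended_Nat"
begin

text \<open>The chain omega-bar = omega with a top adjoined is modelled by enat
  (with infinity as the top element omega).  Functions are ordered pointwise
  (le_fun), inf/sup on functions are pointwise meet/join, and the monoid
  product fg is composition f o g.\<close>

definition time_warps :: "(enat \<Rightarrow> enat) set" where
  "time_warps = {f. mono f \<and> f 0 = 0 \<and> f \<infinity> = (SUP n. f (enat n))}"

text \<open>Right residual h/g: the (unique) greatest time warp f with f o g \<le> h,
  i.e. the operation with  f \<le> h/g \<longleftrightarrow> f o g \<le> h  for all time warps f.\<close>
definition rres :: "(enat \<Rightarrow> enat) \<Rightarrow> (enat \<Rightarrow> enat) \<Rightarrow> (enat \<Rightarrow> enat)" where
  "rres h g = (GREATEST f. f \<in> time_warps \<and> f \<circ> g \<le> h)"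

text \<open>Left residual f\h: the greatest time warp g with f o g \<le> h.\<close>
definition lres :: "(enat \<Rightarrow> enat) \<Rightarrow> (enat \<Rightarrow> enat) \<Rightarrow> (enat \<Rightarrow> enat)" where
  "lres f h = (GREATEST g. g \<in> time_warps \<and> f \<circ> g \<le> h)"

end

theory Submission
  imports Defs
begin

lemma tw_mono: "f \<in> time_warps \<Longrightarrow> mono f"
  by (simp add: time_warps_def)
lemma tw_0: "f \<in> time_warps \<Longrightarrow> f 0 = 0"
  by (simp add: time_warps_def)
lemma tw_inf: "f \<in> time_warps \<Longrightarrow> f \<infinity> = (SUP n. f (enat n))"
  by (simp add: time_warps_def)

lemma tw_intro:
  assumes m: "mono f" and z: "f 0 = 0"
    and c: "\<And>c. c < f \<infinity> \<Longrightarrow> \<exists>n. c < f (enat n)"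
  shows "f \<in> time_warps"
proof -
  have le: "(SUP n. f (enat n)) \<le> f \<infinity>"
    by (rule SUP_least) (use m in \<open>auto simp: mono_def\<close>)
  have "f \<infinity> \<le> (SUP n. f (enat n))"
  proof (rule ccontr)
    assume "\<not> ?thesis"
    hence "(SUP n. f (enat n)) < f \<infinity>" by simp
    then obtain n where "(SUP n. f (enat n)) < f (enat n)" using c by blast
    moreover have "f (enat n) \<le> (SUP n. f (enat n))" by (rule SUP_upper) simp
    ultimately show False by simp
  qed
  thus ?thesis using le m z by (simp add: time_warps_def antisym)
qed

lemma tw_elim: "f \<in> time_warps \<Longrightarrow> c < f \<infinity> \<Longrightarrow> \<exists>n. c < f (enat n)"
  using tw_inf[of f] by (simp add: less_SUP_iff)

lemma tw_Sup: "S \<subseteq> time_warps \<Longrightarrow> Sup S \<in> time_warps"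
proof (rule tw_intro)
  assume S: "S \<subseteq> time_warps"
  show "mono (Sup S)"
    unfolding mono_def Sup_apply
    apply (intro allI impI SUP_mono)
    using S by (meson monoD subsetD tw_mono)
  show "Sup S 0 = 0"
    using S by (auto simp: Sup_apply tw_0 intro!: antisym SUP_least)
  fix c assume "c < Sup S \<infinity>"
  then obtain f where f: "f \<in> S" "c < f \<infinity>" by (auto simp: Sup_apply less_SUP_iff)
  then obtain n where "c < f (enat n)" using S tw_elim by blast
  moreover have "f (enat n) \<le> Sup S (enat n)" using f by (auto simp: Sup_apply intro: SUP_upper)
  ultimately show "\<exists>n. c < Sup S (enat n)" by (meson less_le_trans)
qed

lemma tw_inf2: "g \<in> time_warps \<Longrightarrow> h \<in> time_warps \<Longrightarrow> inf g h \<in> time_warps"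
proof (rule tw_intro)
  assume g: "g \<in> time_warps" and h: "h \<in> time_warps"
  show "mono (inf g h)" using tw_mono[OF g] tw_mono[OF h]
    by (auto simp: mono_def le_infI1 le_infI2)
  show "inf g h 0 = 0" using g h by (simp add: tw_0)
  fix c assume "c < inf g h \<infinity>"
  then obtain n1 n2 where "c < g (enat n1)" "c < h (enat n2)"
    using g h tw_elim by (metis inf_apply inf_min min_less_iff_conj)
  moreover have "g (enat n1) \<le> g (enat (max n1 n2))" "h (enat n2) \<le> h (enat (max n1 n2))"
    using tw_mono[OF g] tw_mono[OF h] by (auto simp: mono_def)
  ultimately show "\<exists>n. c < inf g h (enat n)"
    by (metis inf_apply inf_min min_less_iff_conj less_le_trans)
qed

lemma tw_sup2: "g \<in> time_warps \<Longrightarrow> h \<in> time_warps \<Longrightarrow> sup g h \<in> time_warps"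
proof (rule tw_intro)
  assume g: "g \<in> time_warps" and h: "h \<in> time_warps"
  show "mono (sup g h)" using tw_mono[OF g] tw_mono[OF h]
    by (auto simp: mono_def le_supI1 le_supI2)
  show "sup g h 0 = 0" using g h by (simp add: tw_0)
  fix c assume "c < sup g h \<infinity>"
  hence "c < g \<infinity> \<or> c < h \<infinity>" by (simp add: sup_max less_max_iff_disj)
  thus "\<exists>n. c < sup g h (enat n)"
    using g h tw_elim by (metis sup_apply sup_max less_max_iff_disj)
qed

lemma tw_Sup_pres:
  assumes f: "f \<in> time_warps"
  shows "f (Sup A) \<le> (SUP a\<in>A. f a)"
proof (cases "Sup A")
  case (enat m)
  show ?thesis
  proof (cases m)
    case 0 thus ?thesis using enat tw_0[OF f] by (metis zero_enat_def zero_le)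
  next
    case (Suc k)
    hence "enat k < Sup A" using enat by simp
    then obtain a where a: "a \<in> A" "enat k < a" by (auto simp: less_Sup_iff)
    have "a \<le> Sup A" using a by (simp add: Sup_upper)
    hence "a = Sup A" using a enat Suc
      by (cases a) auto
    thus ?thesis using a by (metis SUP_upper)
  qed
next
  case infinity
  have "f \<infinity> \<le> (SUP a\<in>A. f a)"
    unfolding tw_inf[OF f]
  proof (rule SUP_least)
    fix n assume "n \<in> (UNIV::nat set)"
    have "enat n < Sup A" using infinity by simp
    then obtain a where a: "a \<in> A" "enat n < a" by (auto simp: less_Sup_iff)
    hence "f (enat n) \<le> f a" using tw_mono[OF f] by (auto simp: mono_def)
    also have "\<dots> \<le> (SUP a\<in>A. f a)" using a by (auto intro: SUP_upper)
    finally show "f (enat n) \<le> (SUP a\<in>A. f a)" .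
  qed
  thus ?thesis using infinity by simp
qed

lemma lres_prop:
  assumes f: "f \<in> time_warps"
  shows "lres f h \<in> time_warps \<and> f \<circ> lres f h \<le> h \<and> (\<forall>k\<in>time_warps. f \<circ> k \<le> h \<longrightarrow> k \<le> lres f h)"
proof -
  let ?S = "{k. k \<in> time_warps \<and> f \<circ> k \<le> h}"
  have SW: "Sup ?S \<in> time_warps" by (rule tw_Sup) auto
  have SC: "f \<circ> Sup ?S \<le> h"
  proof (rule le_funI)
    fix x
    have "f (Sup ?S x) = f (Sup ((\<lambda>k. k x) ` ?S))" by (simp add: Sup_apply)
    also have "\<dots> \<le> (SUP a\<in>((\<lambda>k. k x) ` ?S). f a)" by (rule tw_Sup_pres[OF f])
    also have "\<dots> \<le> h x"
      by (auto intro!: SUP_least simp: le_fun_def)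
    finally show "(f \<circ> Sup ?S) x \<le> h x" by simp
  qed
  have "lres f h = Sup ?S"
    unfolding lres_def
    by (rule Greatest_equality) (use SW SC in \<open>auto intro: Sup_upper\<close>)
  thus ?thesis using SW SC by (auto intro: Sup_upper)
qed

lemma rres_prop:
  shows "rres h g \<in> time_warps \<and> rres h g \<circ> g \<le> h \<and> (\<forall>k\<in>time_warps. k \<circ> g \<le> h \<longrightarrow> k \<le> rres h g)"
proof -
  let ?S = "{k. k \<in> time_warps \<and> k \<circ> g \<le> h}"
  have SW: "Sup ?S \<in> time_warps" by (rule tw_Sup) auto
  have SC: "Sup ?S \<circ> g \<le> h"
    by (auto intro!: le_funI SUP_least simp: Sup_apply le_fun_def)
  have "rres h g = Sup ?S"
    unfolding rres_def
    by (rule Greatest_equality) (use SW SC in \<open>auto intro: Sup_upper\<close>)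
  thus ?thesis using SW SC by (auto intro: Sup_upper)
qed

lemma lres_iff:
  assumes f: "f \<in> time_warps" and k: "k \<in> time_warps"
  shows "k \<le> lres f h \<longleftrightarrow> f \<circ> k \<le> h"
proof
  assume "k \<le> lres f h"
  hence "f \<circ> k \<le> f \<circ> lres f h" using tw_mono[OF f] by (auto simp: le_fun_def mono_def)
  thus "f \<circ> k \<le> h" using lres_prop[OF f, of h] by auto
qed (use lres_prop[OF f, of h] k in auto)

lemma rres_iff:
  assumes k: "k \<in> time_warps"
  shows "k \<le> rres h g \<longleftrightarrow> k \<circ> g \<le> h"
proof
  assume "k \<le> rres h g"
  hence "k \<circ> g \<le> rres h g \<circ> g" by (auto simp: le_fun_def)
  thus "k \<circ> g \<le> h" using rres_prop[of h g] by auto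
qed (use rres_prop[of h g] k in auto)

lemma eq_lower:
  assumes "X \<in> time_warps" "Y \<in> time_warps"
    and "\<And>k. k \<in> time_warps \<Longrightarrow> k \<le> X \<longleftrightarrow> k \<le> Y"
  shows "X = Y"
proof -
  have "X \<le> Y" using assms(3)[OF assms(1)] by simp
  moreover have "Y \<le> X" using assms(3)[OF assms(2)] by simp
  ultimately show ?thesis by (rule antisym)
qed

lemma fin_le:
  assumes k: "k \<in> time_warps" and R: "R \<in> time_warps"
    and le: "\<And>n. k (enat n) \<le> R (enat n)"
  shows "k \<le> R"
proof (rule le_funI)
  fix x show "k x \<le> R x"
  proof (cases x)
    case (enat n) thus ?thesis using le by simp
  next
    case infinity
    have "(SUP n. k (enat n)) \<le> (SUP n. R (enat n))"
      by (rule SUP_mono) (use le in auto)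
    thus ?thesis using infinity tw_inf[OF k] tw_inf[OF R] by simp
  qed
qed

definition st :: "nat \<Rightarrow> enat \<Rightarrow> enat \<Rightarrow> enat" where
  "st n c y = (if y < enat n then 0 else c)"

lemma st_tw: "0 < n \<Longrightarrow> st n c \<in> time_warps"
proof (rule tw_intro)
  assume n: "0 < n"
  show "mono (st n c)" by (auto simp: mono_def st_def)
  show "st n c 0 = 0" using n by (simp add: st_def zero_enat_def)
  fix d assume "d < st n c \<infinity>"
  hence "d < st n c (enat n)" by (simp add: st_def)
  thus "\<exists>m. d < st n c (enat m)" by blast
qed

lemma ptL:
  assumes A: "A \<in> time_warps" and B: "mono B" and n: "0 < n"
    and c: "A c \<le> B (enat n)"
  shows "c \<le> lres A B (enat n)"
proof -
  have "A \<circ> st n c \<le> B"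
  proof (rule le_funI)
    fix y
    show "(A \<circ> st n c) y \<le> B y"
    proof (cases "y < enat n")
      case True thus ?thesis using tw_0[OF A] by (simp add: st_def)
    next
      case False
      hence "B (enat n) \<le> B y" using B by (simp add: mono_def)
      thus ?thesis using False c by (simp add: st_def)
    qed
  qed
  hence "st n c \<le> lres A B" using lres_iff[OF A st_tw[OF n]] by simp
  hence "st n c (enat n) \<le> lres A B (enat n)" by (rule le_funD)
  thus ?thesis by (simp add: st_def)
qed

lemma ptR:
  assumes n: "0 < n"
    and c: "\<And>x. enat n \<le> A x \<Longrightarrow> c \<le> B x"
  shows "c \<le> rres B A (enat n)"
proof -
  have "st n c \<circ> A \<le> B"
    by (rule le_funI) (use c in \<open>auto simp: st_def not_less\<close>)
  hence "st n c \<le> rres B A" using rres_iff[OF st_tw[OF n]] by simp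
  hence "st n c (enat n) \<le> rres B A (enat n)" by (rule le_funD)
  thus ?thesis by (simp add: st_def)
qed

lemma mono_max:
  fixes k :: "'a::linorder \<Rightarrow> 'b::linorder"
  assumes m: "mono k" shows "k (max a b) = max (k a) (k b)"
proof (cases "a \<le> b")
  case True
  hence "k a \<le> k b" using m by (rule monoD[rotated])
  thus ?thesis using True by (simp add: max_def)
next
  case False
  hence "b \<le> a" by simp
  hence "k b \<le> k a" using m by (rule monoD[rotated])
  thus ?thesis using False by (simp add: max_def)
qed


lemma comp_sup_le: "(sup g h \<circ> k \<le> f) \<longleftrightarrow> (g \<circ> k \<le> f \<and> h \<circ> k \<le> f)"
  by (auto simp: le_fun_def)

lemma comp_sup_le2:
  fixes k :: "enat \<Rightarrow> enat"
  assumes m: "mono k" shows "(k \<circ> sup g h \<le> f) \<longleftrightarrow> (k \<circ> g \<le> f \<and> k \<circ> h \<le> f)"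
proof -
  have e: "\<And>a b. k (sup a b) = sup (k a) (k b)" using mono_max[OF m] by (simp add: sup_max)
  show ?thesis by (auto simp: le_fun_def e)
qed

lemma partA:
  assumes f: "f \<in> time_warps"
  shows "lres f (inf g h) = inf (lres f g) (lres f h)"
proof (rule eq_lower)
  show "lres f (inf g h) \<in> time_warps" using lres_prop[OF f] by blast
  show "inf (lres f g) (lres f h) \<in> time_warps"
    using lres_prop[OF f, of g] lres_prop[OF f, of h] by (blast intro: tw_inf2)
  fix k assume k: "k \<in> time_warps"
  show "k \<le> lres f (inf g h) \<longleftrightarrow> k \<le> inf (lres f g) (lres f h)"
    using lres_iff[OF f k] by (simp add: le_inf_iff)
qed

lemma partD:
  assumes f: "f \<in> time_warps" and g: "g \<in> time_warps" and h: "h \<in> time_warps"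
  shows "lres (sup g h) f = inf (lres g f) (lres h f)"
proof (rule eq_lower)
  have s: "sup g h \<in> time_warps" using g h by (rule tw_sup2)
  show "lres (sup g h) f \<in> time_warps" using lres_prop[OF s] by auto
  show "inf (lres g f) (lres h f) \<in> time_warps"
    using lres_prop[OF g] lres_prop[OF h] by (auto intro: tw_inf2)
  fix k assume k: "k \<in> time_warps"
  show "k \<le> lres (sup g h) f \<longleftrightarrow> k \<le> inf (lres g f) (lres h f)"
    using lres_iff[OF s k] lres_iff[OF g k] lres_iff[OF h k] comp_sup_le by simp
qed

lemma partE:
  shows "rres (inf g h) f = inf (rres g f) (rres h f)"
proof (rule eq_lower)
  show "rres (inf g h) f \<in> time_warps" using rres_prop by blast
  show "inf (rres g f) (rres h f) \<in> time_warps"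
    using rres_prop[of g f] rres_prop[of h f] by (blast intro: tw_inf2)
  fix k assume k: "k \<in> time_warps"
  show "k \<le> rres (inf g h) f \<longleftrightarrow> k \<le> inf (rres g f) (rres h f)"
    using rres_iff[OF k] by (simp add: le_inf_iff)
qed

lemma partH:
  shows "rres f (sup g h) = inf (rres f g) (rres f h)"
proof (rule eq_lower)
  show "rres f (sup g h) \<in> time_warps" using rres_prop by auto
  show "inf (rres f g) (rres f h) \<in> time_warps" using rres_prop by (auto intro: tw_inf2)
  fix k assume k: "k \<in> time_warps"
  show "k \<le> rres f (sup g h) \<longleftrightarrow> k \<le> inf (rres f g) (rres f h)"
    using rres_iff[OF k] comp_sup_le2[OF tw_mono[OF k]] by simp
qed

lemma partB:
  assumes f: "f \<in> time_warps" and g: "g \<in> time_warps" and h: "h \<in> time_warps"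
  shows "lres (inf g h) f = sup (lres g f) (lres h f)"
proof (rule antisym)
  have i: "inf g h \<in> time_warps" using g h by (rule tw_inf2)
  have XW: "lres (inf g h) f \<in> time_warps" using lres_prop[OF i] by auto
  have GW: "lres g f \<in> time_warps" using lres_prop[OF g] by auto
  have HW: "lres h f \<in> time_warps" using lres_prop[OF h] by auto
  have YW: "sup (lres g f) (lres h f) \<in> time_warps" using GW HW by (rule tw_sup2)
  show "sup (lres g f) (lres h f) \<le> lres (inf g h) f"
  proof (rule le_supI)
    have "g \<circ> lres g f \<le> f" using lres_prop[OF g] by auto
    hence "inf g h \<circ> lres g f \<le> f" by (auto simp: le_fun_def intro: le_infI1 order_trans)
    thus "lres g f \<le> lres (inf g h) f" using lres_iff[OF i GW] by simp
    have "h \<circ> lres h f \<le> f" using lres_prop[OF h] by auto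
    hence "inf g h \<circ> lres h f \<le> f" by (auto simp: le_fun_def intro: le_infI2 order_trans)
    thus "lres h f \<le> lres (inf g h) f" using lres_iff[OF i HW] by simp
  qed
  show "lres (inf g h) f \<le> sup (lres g f) (lres h f)"
  proof (rule fin_le[OF XW YW])
    fix n
    show "lres (inf g h) f (enat n) \<le> sup (lres g f) (lres h f) (enat n)"
    proof (cases "n = 0")
      case True thus ?thesis using tw_0[OF XW] by (simp add: zero_enat_def[symmetric])
    next
      case False
      hence n: "0 < n" by simp
      let ?c = "lres (inf g h) f (enat n)"
      have "inf g h \<circ> lres (inf g h) f \<le> f" using lres_prop[OF i] by auto
      hence "min (g ?c) (h ?c) \<le> f (enat n)" by (auto simp: le_fun_def inf_min)
      hence "g ?c \<le> f (enat n) \<or> h ?c \<le> f (enat n)" by (simp add: min_le_iff_disj)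
      thus ?thesis
      proof
        assume "g ?c \<le> f (enat n)"
        hence "?c \<le> lres g f (enat n)" by (rule ptL[OF g tw_mono[OF f] n])
        thus ?thesis by (simp add: le_supI1)
      next
        assume "h ?c \<le> f (enat n)"
        hence "?c \<le> lres h f (enat n)" by (rule ptL[OF h tw_mono[OF f] n])
        thus ?thesis by (simp add: le_supI2)
      qed
    qed
  qed
qed

lemma partC:
  assumes f: "f \<in> time_warps" and g: "g \<in> time_warps" and h: "h \<in> time_warps"
  shows "lres f (sup g h) = sup (lres f g) (lres f h)"
proof (rule antisym)
  have s: "sup g h \<in> time_warps" using g h by (rule tw_sup2)
  have XW: "lres f (sup g h) \<in> time_warps" using lres_prop[OF f] by auto
  have GW: "lres f g \<in> time_warps" using lres_prop[OF f] by auto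
  have HW: "lres f h \<in> time_warps" using lres_prop[OF f] by auto
  have YW: "sup (lres f g) (lres f h) \<in> time_warps" using GW HW by (rule tw_sup2)
  show "sup (lres f g) (lres f h) \<le> lres f (sup g h)"
  proof (rule le_supI)
    have "f \<circ> lres f g \<le> g" using lres_prop[OF f] by auto
    hence "f \<circ> lres f g \<le> sup g h" by (auto simp: le_fun_def intro: le_supI1)
    thus "lres f g \<le> lres f (sup g h)" using lres_iff[OF f GW] by simp
    have "f \<circ> lres f h \<le> h" using lres_prop[OF f] by auto
    hence "f \<circ> lres f h \<le> sup g h" by (auto simp: le_fun_def intro: le_supI2)
    thus "lres f h \<le> lres f (sup g h)" using lres_iff[OF f HW] by simp
  qed
  show "lres f (sup g h) \<le> sup (lres f g) (lres f h)"
  proof (rule fin_le[OF XW YW])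
    fix n
    show "lres f (sup g h) (enat n) \<le> sup (lres f g) (lres f h) (enat n)"
    proof (cases "n = 0")
      case True thus ?thesis using tw_0[OF XW] by (simp add: zero_enat_def[symmetric])
    next
      case False
      hence n: "0 < n" by simp
      let ?c = "lres f (sup g h) (enat n)"
      have "f \<circ> lres f (sup g h) \<le> sup g h" using lres_prop[OF f] by auto
      hence "f ?c \<le> max (g (enat n)) (h (enat n))" by (auto simp: le_fun_def sup_max)
      hence "f ?c \<le> g (enat n) \<or> f ?c \<le> h (enat n)" by (simp add: le_max_iff_disj)
      thus ?thesis
      proof
        assume "f ?c \<le> g (enat n)"
        hence "?c \<le> lres f g (enat n)" by (rule ptL[OF f tw_mono[OF g] n])
        thus ?thesis by (simp add: le_supI1)
      next
        assume "f ?c \<le> h (enat n)"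
        hence "?c \<le> lres f h (enat n)" by (rule ptL[OF f tw_mono[OF h] n])
        thus ?thesis by (simp add: le_supI2)
      qed
    qed
  qed
qed

lemma partF:
  assumes f: "f \<in> time_warps" and g: "g \<in> time_warps" and h: "h \<in> time_warps"
  shows "rres f (inf g h) = sup (rres f g) (rres f h)"
proof (rule antisym)
  have XW: "rres f (inf g h) \<in> time_warps" using rres_prop by auto
  have GW: "rres f g \<in> time_warps" using rres_prop by auto
  have HW: "rres f h \<in> time_warps" using rres_prop by auto
  have YW: "sup (rres f g) (rres f h) \<in> time_warps" using GW HW by (rule tw_sup2)
  show "sup (rres f g) (rres f h) \<le> rres f (inf g h)"
  proof (rule le_supI)
    have "rres f g \<circ> g \<le> f" using rres_prop by auto
    hence "rres f g \<circ> inf g h \<le> f" using tw_mono[OF GW]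
      unfolding le_fun_def comp_def inf_apply by (meson inf_le1 monoD order_trans)
    thus "rres f g \<le> rres f (inf g h)" using rres_iff[OF GW] by simp
    have "rres f h \<circ> h \<le> f" using rres_prop by auto
    hence "rres f h \<circ> inf g h \<le> f" using tw_mono[OF HW]
      unfolding le_fun_def comp_def inf_apply by (meson inf_le2 monoD order_trans)
    thus "rres f h \<le> rres f (inf g h)" using rres_iff[OF HW] by simp
  qed
  show "rres f (inf g h) \<le> sup (rres f g) (rres f h)"
  proof (rule fin_le[OF XW YW])
    fix n
    show "rres f (inf g h) (enat n) \<le> sup (rres f g) (rres f h) (enat n)"
    proof (cases "n = 0")
      case True thus ?thesis using tw_0[OF XW] by (simp add: zero_enat_def[symmetric])
    next
      case False
      hence n: "0 < n" by simp
      let ?X = "rres f (inf g h)"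
      let ?c = "?X (enat n)"
      have XC: "?X \<circ> inf g h \<le> f" using rres_prop by auto
      have "(\<forall>x. enat n \<le> g x \<longrightarrow> ?c \<le> f x) \<or> (\<forall>x. enat n \<le> h x \<longrightarrow> ?c \<le> f x)"
      proof (rule ccontr)
        assume "\<not> ?thesis"
        then obtain x1 x2 where x1: "enat n \<le> g x1" "\<not> ?c \<le> f x1"
          and x2: "enat n \<le> h x2" "\<not> ?c \<le> f x2" by blast
        let ?x = "max x1 x2"
        have "g x1 \<le> g ?x" by (rule monoD[OF tw_mono[OF g]]) simp
        with x1(1) have "enat n \<le> g ?x" by (rule order_trans)
        moreover have "h x2 \<le> h ?x" by (rule monoD[OF tw_mono[OF h]]) simp
        with x2(1) have "enat n \<le> h ?x" by (rule order_trans)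
        ultimately have "enat n \<le> inf g h ?x" by simp
        hence "?c \<le> ?X (inf g h ?x)" using tw_mono[OF XW] by (simp add: monoD)
        also have "\<dots> \<le> f ?x" using XC by (simp add: le_fun_def)
        finally have "?c \<le> f ?x" .
        thus False using x1(2) x2(2) by (cases "x1 \<le> x2") (simp_all add: max_def)
      qed
      thus ?thesis
      proof
        assume "\<forall>x. enat n \<le> g x \<longrightarrow> ?c \<le> f x"
        hence "?c \<le> rres f g (enat n)" using ptR[OF n] by blast
        thus ?thesis by (simp add: le_supI1)
      next
        assume "\<forall>x. enat n \<le> h x \<longrightarrow> ?c \<le> f x"
        hence "?c \<le> rres f h (enat n)" using ptR[OF n] by blast
        thus ?thesis by (simp add: le_supI2)
      qed
    qed
  qed
qed

lemma partG:
  assumes f: "f \<in> time_warps" and g: "g \<in> time_warps" and h: "h \<in> time_warps"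
  shows "rres (sup g h) f = sup (rres g f) (rres h f)"
proof (rule antisym)
  have XW: "rres (sup g h) f \<in> time_warps" using rres_prop by auto
  have GW: "rres g f \<in> time_warps" using rres_prop by auto
  have HW: "rres h f \<in> time_warps" using rres_prop by auto
  have YW: "sup (rres g f) (rres h f) \<in> time_warps" using GW HW by (rule tw_sup2)
  show "sup (rres g f) (rres h f) \<le> rres (sup g h) f"
  proof (rule le_supI)
    have "rres g f \<circ> f \<le> g" using rres_prop by auto
    hence "rres g f \<circ> f \<le> sup g h" by (auto simp: le_fun_def intro: le_supI1)
    thus "rres g f \<le> rres (sup g h) f" using rres_iff[OF GW] by simp
    have "rres h f \<circ> f \<le> h" using rres_prop by auto
    hence "rres h f \<circ> f \<le> sup g h" by (auto simp: le_fun_def intro: le_supI2)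
    thus "rres h f \<le> rres (sup g h) f" using rres_iff[OF HW] by simp
  qed
  show "rres (sup g h) f \<le> sup (rres g f) (rres h f)"
  proof (rule fin_le[OF XW YW])
    fix n
    show "rres (sup g h) f (enat n) \<le> sup (rres g f) (rres h f) (enat n)"
    proof (cases "n = 0")
      case True thus ?thesis using tw_0[OF XW] by (simp add: zero_enat_def[symmetric])
    next
      case False
      hence n: "0 < n" by simp
      let ?X = "rres (sup g h) f"
      let ?c = "?X (enat n)"
      have XC: "?X \<circ> f \<le> sup g h" using rres_prop by auto
      have "(\<forall>x. enat n \<le> f x \<longrightarrow> ?c \<le> g x) \<or> (\<forall>x. enat n \<le> f x \<longrightarrow> ?c \<le> h x)"
      proof (rule ccontr)
        assume "\<not> ?thesis"
        then obtain x1 x2 where x1: "enat n \<le> f x1" "\<not> ?c \<le> g x1"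
          and x2: "enat n \<le> f x2" "\<not> ?c \<le> h x2" by blast
        let ?x = "min x1 x2"
        have fx: "enat n \<le> f ?x" using x1(1) x2(1) by (cases "x1 \<le> x2") (simp_all add: min_def)
        have gx: "g ?x \<le> g x1" using tw_mono[OF g] by (simp add: monoD)
        have hx: "h ?x \<le> h x2" using tw_mono[OF h] by (simp add: monoD)
        have "?c \<le> ?X (f ?x)" using fx tw_mono[OF XW] by (simp add: monoD)
        also have "\<dots> \<le> max (g ?x) (h ?x)" using XC by (simp add: le_fun_def sup_max)
        finally have "?c \<le> max (g ?x) (h ?x)" .
        thus False using x1(2) x2(2) gx hx by (meson le_max_iff_disj order_trans)
      qed
      thus ?thesis
      proof
        assume "\<forall>x. enat n \<le> f x \<longrightarrow> ?c \<le> g x"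
        hence "?c \<le> rres g f (enat n)" using ptR[OF n] by blast
        thus ?thesis by (simp add: le_supI1)
      next
        assume "\<forall>x. enat n \<le> f x \<longrightarrow> ?c \<le> h x"
        hence "?c \<le> rres h f (enat n)" using ptR[OF n] by blast
        thus ?thesis by (simp add: le_supI2)
      qed
    qed
  qed
qed

theorem lemma2p2:
  fixes f g h :: "enat \<Rightarrow> enat"
  assumes "f \<in> time_warps" and "g \<in> time_warps" and "h \<in> time_warps"
  shows "(lres f (inf g h) = inf (lres f g) (lres f h))
    \<and> (lres (inf g h) f = sup (lres g f) (lres h f))
    \<and> (lres f (sup g h) = sup (lres f g) (lres f h))
    \<and> (lres (sup g h) f = inf (lres g f) (lres h f))
    \<and> (rres (inf g h) f = inf (rres g f) (rres h f))
    \<and> (rres f (inf g h) = sup (rres f g) (rres f h))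
    \<and> (rres (sup g h) f = sup (rres g f) (rres h f))
    \<and> (rres f (sup g h) = inf (rres f g) (rres f h))"
  by (intro conjI partA[OF assms(1)] partB[OF assms] partC[OF assms] partD[OF assms]
    partE partF[OF assms] partG[OF assms] partH)

end
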